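(* For any sequence of points $u\in U$ converging to a vertex $p_i$, after passing to a subsequence, either $|\nabla\varphi(u)|\to\infty$ or $\nabla\varphi(u)$ converges to a point of $\partial C_{p_i}$.
   Context: $n\ge3$; $p_1,\dots,p_n\in\mathbb{R}^2_{(u_1,u_2)}$ are distinct vertices, in counterclockwise order, of a convex polygon with interior $U$; indices mod $n$. $A\ge0$, $V(u)=A+\sum_i\frac{1}{2|u-p_i|}$. For $b_1,\dots,b_n\in\mathbb{R}$, $\varphi:\overline U\to\mathbb{R}$ is the unique continuous convex function, smooth in $U$, with $\det D^2\varphi=V$ in $U$, $\varphi(p_i)=b_i$, and $\varphi$ affine linear on each edge $[p_i,p_{i+1}]$. The subgradient set at a vertex is $C_{p_i}=\{y\in\mathbb{R}^2:\varphi(u)-\varphi(p_i)\ge\langle y,u-p_i\rangle\ \forall u\in\overline U\}$. *)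

theory Defs
  imports "HOL-Analysis.Analysis"
begin

definition cross2 :: "real^2 \<Rightarrow> real^2 \<Rightarrow> real" where
  "cross2 a b = a$1 * b$2 - a$2 * b$1"

text \<open>p 0, ..., p (n-1) are distinct vertices, in counterclockwise order, of a convex
  polygon: every other vertex lies strictly to the left of each directed edge
  p i -> p ((i+1) mod n).\<close>
definition ccw_convex_polygon :: "nat \<Rightarrow> (nat \<Rightarrow> real^2) \<Rightarrow> bool" where
  "ccw_convex_polygon n p \<longleftrightarrow> 3 \<le> n \<and> inj_on p {..<n} \<and>
     (\<forall>i<n. \<forall>j<n. j \<noteq> i \<and> j \<noteq> (i + 1) mod n \<longrightarrow>
        cross2 (p ((i + 1) mod n) - p i) (p j - p i) > 0)"

definition polygon_interior :: "nat \<Rightarrow> (nat \<Rightarrow> real^2) \<Rightarrow> (real^2) set" where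
  "polygon_interior n p = interior (convex hull (p ` {..<n}))"

definition potential :: "real \<Rightarrow> nat \<Rightarrow> (nat \<Rightarrow> real^2) \<Rightarrow> real^2 \<Rightarrow> real" where
  "potential A n p u = A + (\<Sum>i<n. 1 / (2 * norm (u - p i)))"

definition partial :: "(real^'n \<Rightarrow> real) \<Rightarrow> 'n \<Rightarrow> real^'n \<Rightarrow> real" where
  "partial f j u = frechet_derivative f (at u) (axis j 1)"

definition grad :: "(real^'n \<Rightarrow> real) \<Rightarrow> real^'n \<Rightarrow> real^'n" where
  "grad f u = (\<chi> j. partial f j u)"

definition hessian :: "(real^'n \<Rightarrow> real) \<Rightarrow> real^'n \<Rightarrow> real^'n^'n" where
  "hessian f u = (\<chi> i j. partial (\<lambda>v. partial f i v) j u)"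

fun iter_partial :: "'n list \<Rightarrow> (real^'n \<Rightarrow> real) \<Rightarrow> real^'n \<Rightarrow> real" where
  "iter_partial [] f = f"
| "iter_partial (j # js) f = partial (iter_partial js f) j"

definition smooth_on :: "(real^'n) set \<Rightarrow> (real^'n \<Rightarrow> real) \<Rightarrow> bool" where
  "smooth_on S f \<longleftrightarrow> (\<forall>js. (\<forall>u\<in>S. iter_partial js f differentiable (at u)))"

definition subgrad_set :: "(real^2) set \<Rightarrow> (real^2 \<Rightarrow> real) \<Rightarrow> real^2 \<Rightarrow> (real^2) set" where
  "subgrad_set K f q = {y. \<forall>u\<in>K. f u - f q \<ge> y \<bullet> (u - q)}"

end

theory Submission
  imports Defs
begin

lemma conv_grad_ineq:
  fixes f :: "'a::real_normed_vector \<Rightarrow> real"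
  assumes cv: "convex_on S f" and u: "u \<in> S" and w: "w \<in> S"
    and D: "(f has_derivative D) (at u)"
  shows "D (w - u) \<le> f w - f u"
proof -
  define h where "h t = f (u + t *\<^sub>R (w - u))" for t :: real
  have "((\<lambda>t. u + t *\<^sub>R (w - u)) has_derivative (\<lambda>t. t *\<^sub>R (w - u))) (at 0)"
    by (auto intro!: derivative_eq_intros)
  moreover have "(f has_derivative D) (at (u + 0 *\<^sub>R (w - u)))" using D by simp
  ultimately have "(h has_derivative (\<lambda>t. D (t *\<^sub>R (w - u)))) (at 0)"
    unfolding h_def by (rule has_derivative_compose[of _ _ _ _ f])
  moreover have "linear D" using D has_derivative_linear by blast
  ultimately have "(h has_derivative (\<lambda>t. t * D (w - u))) (at 0)"
    by (simp add: linear_scale)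
  hence "(h has_field_derivative D (w - u)) (at 0)"
    unfolding has_field_derivative_def by (simp add: mult.commute[of _ "D (w - u)"])
  hence "((\<lambda>t. (h t - h 0) / (t - 0)) \<longlongrightarrow> D (w - u)) (at 0)"
    using has_field_derivative_iff by blast
  hence lim: "((\<lambda>t. (h t - h 0) / t) \<longlongrightarrow> D (w - u)) (at_right 0)"
    by (auto intro: tendsto_mono at_le)
  have ev: "eventually (\<lambda>t. (h t - h 0) / t \<le> f w - f u) (at_right 0)"
  proof -
    have "eventually (\<lambda>t. t \<in> {0<..<1::real}) (at_right 0)"
      using eventually_at_right_real[of 0 1] by simp
    thus ?thesis
    proof eventually_elim
      case (elim t)
      hence t: "0 < t" "t < 1" by auto
      have "f ((1 - t) *\<^sub>R u + t *\<^sub>R w) \<le> (1 - t) * f u + t * f w"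
        using convex_onD[OF cv, of t u w] t u w by auto
      moreover have "(1 - t) *\<^sub>R u + t *\<^sub>R w = u + t *\<^sub>R (w - u)"
        by (simp add: algebra_simps)
      ultimately have "h t - h 0 \<le> t * (f w - f u)"
        unfolding h_def by (simp add: algebra_simps)
      thus ?case using t by (simp add: divide_le_eq mult.commute)
    qed
  qed
  show ?thesis
    using tendsto_upperbound[OF lim ev] trivial_limit_at_right_real by simp
qed

lemma grad_inner:
  fixes f :: "real^'n \<Rightarrow> real"
  assumes "f differentiable (at u)"
  shows "grad f u \<bullet> v = frechet_derivative f (at u) v"
proof -
  let ?D = "frechet_derivative f (at u)"
  have "linear ?D" using assms frechet_derivative_works has_derivative_linear by blast
  have "v = (\<Sum>j\<in>UNIV. (v$j) *\<^sub>R axis j 1)"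
    by (simp add: vec_eq_iff axis_def if_distrib cong: if_cong)
  hence "?D v = ?D (\<Sum>j\<in>UNIV. (v$j) *\<^sub>R axis j 1)" by simp
  also have "\<dots> = (\<Sum>j\<in>UNIV. v$j * ?D (axis j 1))"
    using \<open>linear ?D\<close> by (simp add: linear_sum linear_scale)
  finally show ?thesis
    by (simp add: inner_vec_def grad_def partial_def mult.commute)
qed

lemma vertex_not_interior:
  assumes poly: "ccw_convex_polygon n p" and i: "i < n"
  shows "p i \<notin> polygon_interior n p"
proof
  assume pin: "p i \<in> polygon_interior n p"
  define d where "d = p ((i + 1) mod n) - p i"
  have n3: "3 \<le> n" and inj: "inj_on p {..<n}"
    and ccw: "\<And>j. j < n \<Longrightarrow> j \<noteq> i \<Longrightarrow> j \<noteq> (i + 1) mod n \<Longrightarrow> cross2 d (p j - p i) > 0"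
    using poly i unfolding ccw_convex_polygon_def d_def by auto
  have "(i + 1) mod n \<noteq> i"
  proof (cases "i + 1 = n")
    case True thus ?thesis using n3 by simp
  next
    case False thus ?thesis using i by simp
  qed
  moreover have "(i + 1) mod n < n" using n3 by simp
  ultimately have "p ((i + 1) mod n) \<noteq> p i" using inj i by (meson inj_on_eq_iff lessThan_iff)
  hence "d \<noteq> 0" unfolding d_def by simp
  define H where "H = {x. cross2 d (x - p i) \<ge> 0}"
  have cH: "convex H"
    unfolding convex_def H_def
  proof (intro ballI allI impI, clarsimp)
    fix x y :: "real^2" and a b :: real
    assume x: "0 \<le> cross2 d (x - p i)" and y: "0 \<le> cross2 d (y - p i)" and ab: "0 \<le> a" "0 \<le> b" "a + b = 1"
    have "cross2 d (a *\<^sub>R x + b *\<^sub>R y - p i) = a * cross2 d (x - p i) + b * cross2 d (y - p i)"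
    proof -
      have b: "b = 1 - a" using ab(3) by simp
      show ?thesis unfolding cross2_def b by (simp add: algebra_simps)
    qed
    thus "0 \<le> cross2 d (a *\<^sub>R x + b *\<^sub>R y - p i)" using x y ab by simp
  qed
  have "p ` {..<n} \<subseteq> H"
  proof
    fix x assume "x \<in> p ` {..<n}"
    then obtain j where j: "j < n" "x = p j" by auto
    show "x \<in> H"
    proof (cases "j = i \<or> j = (i + 1) mod n")
      case True
      thus ?thesis using j unfolding H_def d_def cross2_def by (auto simp: algebra_simps)
    next
      case False
      thus ?thesis using ccw[of j] j unfolding H_def by auto
    qed
  qed
  hence hull: "convex hull (p ` {..<n}) \<subseteq> H" using cH by (simp add: hull_minimal)
  obtain e where e: "e > 0" "ball (p i) e \<subseteq> convex hull (p ` {..<n})"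
    using pin unfolding polygon_interior_def by (meson mem_interior)
  define v :: "real^2" where "v = (\<chi> k. if k = 1 then d$2 else - (d$1))"
  have v1: "v$1 = d$2" and v2: "v$2 = - d$1" by (simp_all add: v_def)
  have dd: "d$1 \<noteq> 0 \<or> d$2 \<noteq> 0"
    using \<open>d \<noteq> 0\<close> by (metis exhaust_2 vec_eq_iff zero_index)
  hence "v \<noteq> 0" using v1 v2 by auto
  hence nv: "norm v > 0" by simp
  define x where "x = p i + (e / (2 * norm v)) *\<^sub>R v"
  have "dist (p i) x = e / 2" using nv e unfolding x_def dist_norm by simp
  hence "x \<in> ball (p i) e" using e by simp
  hence xH: "x \<in> H" using e hull by blast
  have cx: "cross2 d (x - p i) = - ((e / (2 * norm v)) * ((d$1)^2 + (d$2)^2))"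
    unfolding x_def cross2_def using v1 v2 by (simp add: power2_eq_square algebra_simps)
  have q: "(d$1)^2 + (d$2)^2 > 0" using dd by (simp add: sum_power2_gt_zero_iff)
  have c: "e / (2 * norm v) > 0" using e nv by simp
  have "(e / (2 * norm v)) * ((d$1)^2 + (d$2)^2) > 0" by (rule mult_pos_pos[OF c q])
  hence "cross2 d (x - p i) < 0" using cx by linarith
  moreover have "cross2 d (x - p i) \<ge> 0" using xH unfolding H_def by simp
  ultimately show False by linarith
qed

theorem mainTheorem8:
  fixes n :: nat and p :: "nat \<Rightarrow> real^2" and A :: real and b :: "nat \<Rightarrow> real"
    and \<phi> :: "real^2 \<Rightarrow> real" and U :: "(real^2) set"
  assumes poly: "ccw_convex_polygon n p"
    and U_def: "U = polygon_interior n p"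
    and A_nonneg: "A \<ge> 0"
    and cont: "continuous_on (closure U) \<phi>"
    and conv: "convex_on (closure U) \<phi>"
    and smooth: "smooth_on U \<phi>"
    and MA: "\<forall>u\<in>U. det (hessian \<phi> u) = potential A n p u"
    and vals: "\<forall>i<n. \<phi> (p i) = b i"
    and edges: "\<forall>i<n. \<forall>t\<in>{0..1::real}.
        \<phi> ((1 - t) *\<^sub>R p i + t *\<^sub>R p ((i + 1) mod n))
          = (1 - t) * \<phi> (p i) + t * \<phi> (p ((i + 1) mod n))"
    and i: "i < n"
    and seq_in: "\<forall>k. s k \<in> U"
    and seq_lim: "s \<longlonglongrightarrow> p i"
  shows "\<exists>r::nat \<Rightarrow> nat. strict_mono r \<and>
           (filterlim (\<lambda>k. norm (grad \<phi> (s (r k)))) at_top sequentially \<or>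
            (\<exists>y \<in> frontier (subgrad_set (closure U) \<phi> (p i)).
               (\<lambda>k. grad \<phi> (s (r k))) \<longlonglongrightarrow> y))"
proof -
  define g where "g k = grad \<phi> (s k)" for k
  define K where "K = closure U"
  define C where "C = subgrad_set K \<phi> (p i)"
  have openU: "open U" unfolding U_def polygon_interior_def by simp
  have diff: "\<phi> differentiable (at u)" if "u \<in> U" for u
    using smooth that unfolding smooth_on_def by (metis iter_partial.simps(1))
  have UK: "U \<subseteq> K" unfolding K_def by (rule closure_subset)
  have cvK: "convex_on K \<phi>" using conv unfolding K_def .
  have tang: "g k \<bullet> (w - s k) \<le> \<phi> w - \<phi> (s k)" if "w \<in> K" for k w
  proof -
    have d: "\<phi> differentiable (at (s k))" using diff seq_in by auto
    have "g k \<bullet> (w - s k) = frechet_derivative \<phi> (at (s k)) (w - s k)"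
      unfolding g_def by (rule grad_inner[OF d])
    also have "\<dots> \<le> \<phi> w - \<phi> (s k)"
      by (rule conv_grad_ineq[OF cvK _ that]) (use UK seq_in d frechet_derivative_works in auto)
    finally show ?thesis .
  qed
  have sne: "s k \<noteq> p i" for k
    using seq_in vertex_not_interior[OF poly i] U_def by metis
  have pK: "p i \<in> K" unfolding K_def
    using seq_in seq_lim by (meson closure_sequential)
  have key: "y \<in> frontier C" if r: "strict_mono r" and lim: "(\<lambda>k. g (r k)) \<longlonglongrightarrow> y" for r y
  proof -
    have slim: "(\<lambda>k. s (r k)) \<longlonglongrightarrow> p i"
      using LIMSEQ_subseq_LIMSEQ[OF seq_lim r] by (simp add: o_def)
    have sK: "s (r k) \<in> K" for k using UK seq_in by auto
    have philim: "(\<lambda>k. \<phi> (s (r k))) \<longlonglongrightarrow> \<phi> (p i)"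
      by (rule continuous_on_tendsto_compose[OF cont[folded K_def] slim pK]) (use sK in auto)
    have yC: "y \<in> C" unfolding C_def subgrad_set_def
    proof (clarify)
      fix w assume w: "w \<in> K"
      have l1: "(\<lambda>k. \<phi> w - \<phi> (s (r k))) \<longlonglongrightarrow> \<phi> w - \<phi> (p i)"
        by (intro tendsto_intros philim)
      have l2: "(\<lambda>k. g (r k) \<bullet> (w - s (r k))) \<longlonglongrightarrow> y \<bullet> (w - p i)"
        by (intro tendsto_intros lim slim)
      show "y \<bullet> (w - p i) \<le> \<phi> w - \<phi> (p i)"
        by (rule LIMSEQ_le[OF l2 l1]) (use tang w in auto)
    qed
    have "y \<notin> interior C"
    proof
      assume "y \<in> interior C"
      then obtain e where e: "e > 0" "ball y e \<subseteq> C" by (meson mem_interior)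
      have bnd: "e / 2 \<le> norm (g (r k) - y)" for k
      proof -
        define d where "d = s (r k) - p i"
        have nd: "norm d > 0" using sne unfolding d_def by simp
        define z where "z = y + (e / 2 / norm d) *\<^sub>R d"
        have "dist y z = e / 2" using nd e unfolding z_def dist_norm by simp
        hence "z \<in> C" using e by auto
        hence "z \<bullet> (s (r k) - p i) \<le> \<phi> (s (r k)) - \<phi> (p i)"
          unfolding C_def subgrad_set_def using sK by auto
        moreover have "z \<bullet> (s (r k) - p i) = y \<bullet> d + e / 2 * norm d"
          using nd unfolding z_def d_def[symmetric]
          by (simp add: inner_add_left power2_norm_eq_inner[symmetric] power2_eq_square)
        moreover have "g (r k) \<bullet> (p i - s (r k)) \<le> \<phi> (p i) - \<phi> (s (r k))"
          using tang pK by blast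
        moreover have "g (r k) \<bullet> (p i - s (r k)) = - (g (r k) \<bullet> d)"
          unfolding d_def by (simp add: inner_diff_right)
        ultimately have "e / 2 * norm d \<le> (g (r k) - y) \<bullet> d"
          by (simp add: inner_diff_left)
        also have "\<dots> \<le> norm (g (r k) - y) * norm d" by (rule norm_cauchy_schwarz)
        finally show ?thesis using nd by simp
      qed
      have "eventually (\<lambda>k. dist (g (r k)) y < e / 2) sequentially"
        using lim e(1) unfolding tendsto_iff by (meson half_gt_zero)
      then obtain k where "dist (g (r k)) y < e / 2" by (meson eventually_sequentially order_refl)
      thus False using bnd[of k] by (simp add: dist_norm)
    qed
    thus ?thesis using yC closure_subset unfolding frontier_def by blast
  qed
  show ?thesis
  proof (cases "filterlim (\<lambda>k. norm (g k)) at_top sequentially")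
    case True
    thus ?thesis unfolding g_def by (intro exI[of _ id]) (simp add: strict_mono_id)
  next
    case False
    then obtain Z where Z: "\<not> eventually (\<lambda>k. Z \<le> norm (g k)) sequentially"
      unfolding filterlim_at_top by blast
    have "infinite {k. norm (g k) < Z}"
      unfolding infinite_nat_iff_unbounded_le
    proof
      fix m
      show "\<exists>k\<ge>m. k \<in> {k. norm (g k) < Z}"
      proof (rule ccontr)
        assume "\<not> ?thesis"
        hence "\<forall>k\<ge>m. Z \<le> norm (g k)" by auto
        hence "eventually (\<lambda>k. Z \<le> norm (g k)) sequentially"
          unfolding eventually_sequentially by blast
        thus False using Z by blast
      qed
    qed
    then obtain r1 :: "nat \<Rightarrow> nat" where r1: "strict_mono r1" "\<forall>k. r1 k \<in> {k. norm (g k) < Z}"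
      using infinite_enumerate by blast
    have "\<forall>k. (g \<circ> r1) k \<in> cball 0 Z" using r1(2) by (auto intro: less_imp_le)
    then obtain y r2 where y: "y \<in> cball 0 Z" and r2: "strict_mono (r2 :: nat \<Rightarrow> nat)"
      and lim: "(g \<circ> r1 \<circ> r2) \<longlonglongrightarrow> y"
      using seq_compactE[OF compact_imp_seq_compact[OF compact_cball]] by metis
    have sm: "strict_mono (r1 \<circ> r2)" using r1(1) r2 by (rule strict_mono_o)
    have lim': "(\<lambda>k. g ((r1 \<circ> r2) k)) \<longlonglongrightarrow> y" using lim by (simp add: o_def)
    have "y \<in> frontier C" by (rule key[OF sm lim'])
    thus ?thesis using sm lim' unfolding g_def C_def K_def by blast
  qed
qed

end
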